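(* For every $\mathcal{H}\subseteq\{0,1\}^{\mathcal{X}}$: (i) $\operatorname{AL}_{w_1}(\mathcal{H})\ge\operatorname{AL}_{w_2}(\mathcal{H})$ for all $w_1<w_2$; (ii) $\operatorname{AL}_w(\mathcal{H})\ge\min\{w,\operatorname{L}(\mathcal{H})\}$ for all $w\in\mathbb{N}$; (iii) if $\operatorname{L}(\mathcal{H})<\infty$ then $\operatorname{AL}_w(\mathcal{H})=\operatorname{L}(\mathcal{H})$ for all $w\ge\operatorname{L}(\mathcal{H})+1$; (iv) if $\operatorname{L}(\mathcal{H})<\infty$ then $\operatorname{W}(\mathcal{H})\le\operatorname{L}(\mathcal{H})+1$; (v) $\operatorname{W}(\mathcal{H})<\infty$ if and only if $\operatorname{L}(\mathcal{H})<\infty$.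
   Context: AL tree of width $w\in\mathbb{N}=\{1,2,\dots\}$ and depth $d$: a binary string $u$ is an internal node if $|u|<d$ and $u$ has fewer than $w$ ones; the tree assigns $x_u\in\mathcal{X}$ to each internal node. A path is a binary string $\sigma$ whose proper prefixes are all internal nodes but which is not itself one (so $|\sigma|=d$ or $\sigma$ has exactly $w$ ones). The tree is shattered by $\mathcal{H}$ if for every path $\sigma$ some $h\in\mathcal{H}$ satisfies $h(x_{(\sigma_1,\dots,\sigma_{i-1})})=\sigma_i$ for all $i\le|\sigma|$. When $w\ge d$ this is a complete binary (Littlestone) tree of depth $d$. $\operatorname{L}(\mathcal{H})$ (Littlestone dimension) is the largest $d$ such that a complete binary tree of depth $d$ is shattered ($\infty$ if unbounded). $\operatorname{AL}_w(\mathcal{H})$ is the largest $d$ such that an AL tree of width $w$ and depth $d$ is shattered ($\infty$ if unbounded, $0$ if none). The Effective width $\operatorname{W}(\mathcal{H})$ is the smallest $w\in\mathbb{N}$ with $\operatorname{AL}_w(\mathcal{H})<\infty$, and $\infty$ if none exists. *)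

theory Defs
  imports Main "HOL-Library.Extended_Nat"
begin

(* Binary strings are bool lists (True = 1). A tree is a labelling
   T :: bool list => 'x; only its values on internal nodes matter. *)

definition ones :: "bool list \<Rightarrow> nat" where
  "ones u = length (filter id u)"

definition AL_internal :: "nat \<Rightarrow> nat \<Rightarrow> bool list \<Rightarrow> bool" where
  "AL_internal w d u \<longleftrightarrow> length u < d \<and> ones u < w"

definition AL_path :: "nat \<Rightarrow> nat \<Rightarrow> bool list \<Rightarrow> bool" where
  "AL_path w d \<sigma> \<longleftrightarrow> (\<forall>i<length \<sigma>. AL_internal w d (take i \<sigma>)) \<and> \<not> AL_internal w d \<sigma>"

definition AL_shattered :: "('x \<Rightarrow> bool) set \<Rightarrow> nat \<Rightarrow> nat \<Rightarrow> (bool list \<Rightarrow> 'x) \<Rightarrow> bool" where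
  "AL_shattered H w d T \<longleftrightarrow>
     (\<forall>\<sigma>. AL_path w d \<sigma> \<longrightarrow> (\<exists>h\<in>H. \<forall>i<length \<sigma>. h (T (take i \<sigma>)) = \<sigma> ! i))"

definition L_shattered :: "('x \<Rightarrow> bool) set \<Rightarrow> nat \<Rightarrow> (bool list \<Rightarrow> 'x) \<Rightarrow> bool" where
  "L_shattered H d T \<longleftrightarrow>
     (\<forall>\<sigma>. length \<sigma> = d \<longrightarrow> (\<exists>h\<in>H. \<forall>i<d. h (T (take i \<sigma>)) = \<sigma> ! i))"

(* largest d, \<infinity> if unbounded, 0 if none (Sup of empty enat set is 0) *)
definition Ldim :: "('x \<Rightarrow> bool) set \<Rightarrow> enat" where
  "Ldim H = Sup (enat ` {d. \<exists>T. L_shattered H d T})"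

definition ALdim :: "nat \<Rightarrow> ('x \<Rightarrow> bool) set \<Rightarrow> enat" where
  "ALdim w H = Sup (enat ` {d. \<exists>T. AL_shattered H w d T})"

definition Wdim :: "('x \<Rightarrow> bool) set \<Rightarrow> enat" where
  "Wdim H = (if \<exists>w\<ge>1. ALdim w H < \<infinity>
             then enat (LEAST w. w \<ge> 1 \<and> ALdim w H < \<infinity>) else \<infinity>)"

end

theory Submission
  imports Defs
begin

lemma ext_path:
  assumes sh: "AL_shattered H w d T" and len: "d \<le> length \<rho>"
    and int: "\<forall>i<m. AL_internal w d (take i \<rho>)"
  shows "\<exists>h\<in>H. \<forall>i<m. h (T (take i \<rho>)) = \<rho> ! i"
proof -
  define k where "k = (LEAST k. \<not> AL_internal w d (take k \<rho>))"
  have ex: "\<not> AL_internal w d (take d \<rho>)" using len by (simp add: AL_internal_def)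
  have kd: "k \<le> d" unfolding k_def using ex by (rule Least_le)
  have nk: "\<not> AL_internal w d (take k \<rho>)" unfolding k_def using ex by (rule LeastI)
  have mk: "m \<le> k"
  proof (rule ccontr)
    assume "\<not> m \<le> k" then have "k < m" by simp
    then show False using int nk by blast
  qed
  have lt: "\<And>i. i < k \<Longrightarrow> AL_internal w d (take i \<rho>)"
    using not_less_Least k_def by blast
  have "AL_path w d (take k \<rho>)"
    unfolding AL_path_def using lt nk kd len by (simp add: min_def)
  then obtain h where h: "h \<in> H" and hh: "\<forall>i<length (take k \<rho>). h (T (take i (take k \<rho>))) = take k \<rho> ! i"
    using sh unfolding AL_shattered_def by blast
  have "\<forall>i<m. h (T (take i \<rho>)) = \<rho> ! i"
  proof (intro allI impI)
    fix i assume "i < m"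
    then have "i < k" "k \<le> length \<rho>" using mk kd len by auto
    then show "h (T (take i \<rho>)) = \<rho> ! i" using hh[rule_format, of i] by (simp add: min_def)
  qed
  then show ?thesis using h by blast
qed

lemma ones_le: "ones u \<le> length u"
  unfolding ones_def by (rule length_filter_le)

lemma L1:
  assumes "AL_shattered H w d T"
  shows "L_shattered H (min w d) T"
  unfolding L_shattered_def
proof (intro allI impI)
  fix \<sigma> :: "bool list" assume l: "length \<sigma> = min w d"
  define \<rho> where "\<rho> = \<sigma> @ replicate d True"
  have "\<forall>i<min w d. AL_internal w d (take i \<rho>)"
  proof (intro allI impI)
    fix i assume i: "i < min w d"
    have t: "take i \<rho> = take i \<sigma>" using i l unfolding \<rho>_def by simp
    have "ones (take i \<sigma>) \<le> i" using ones_le[of "take i \<sigma>"] by simp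
    then show "AL_internal w d (take i \<rho>)" using i l t unfolding AL_internal_def by simp
  qed
  moreover have "d \<le> length \<rho>" unfolding \<rho>_def by simp
  ultimately obtain h where h: "h \<in> H" and hh: "\<forall>i<min w d. h (T (take i \<rho>)) = \<rho> ! i"
    using ext_path[OF assms, of \<rho>] by blast
  have "\<forall>i<min w d. h (T (take i \<sigma>)) = \<sigma> ! i"
  proof (intro allI impI)
    fix i assume i: "i < min w d"
    have t: "take i \<rho> = take i \<sigma>" using i l unfolding \<rho>_def by simp
    have n: "\<rho> ! i = \<sigma> ! i" using i l unfolding \<rho>_def by (simp add: nth_append)
    have "h (T (take i \<rho>)) = \<rho> ! i" using hh i by blast
    then show "h (T (take i \<sigma>)) = \<sigma> ! i" using t n by simp
  qed
  then show "\<exists>h\<in>H. \<forall>i<min w d. h (T (take i \<sigma>)) = \<sigma> ! i" using h by blast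
qed

lemma L3:
  assumes "AL_shattered H w2 d T" "w1 \<le> w2"
  shows "AL_shattered H w1 d T"
  unfolding AL_shattered_def
proof (intro allI impI)
  fix \<sigma> assume p: "AL_path w1 d \<sigma>"
  define \<rho> where "\<rho> = \<sigma> @ replicate d False"
  have "\<forall>i<length \<sigma>. AL_internal w2 d (take i \<rho>)"
  proof (intro allI impI)
    fix i assume i: "i < length \<sigma>"
    have t: "take i \<rho> = take i \<sigma>" using i unfolding \<rho>_def by simp
    have "AL_internal w1 d (take i \<sigma>)" using p i unfolding AL_path_def by blast
    then show "AL_internal w2 d (take i \<rho>)" using t assms(2) unfolding AL_internal_def by simp
  qed
  moreover have "d \<le> length \<rho>" unfolding \<rho>_def by simp
  ultimately obtain h where h: "h \<in> H" and hh: "\<forall>i<length \<sigma>. h (T (take i \<rho>)) = \<rho> ! i"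
    using ext_path[OF assms(1), of \<rho>] by blast
  have "\<forall>i<length \<sigma>. h (T (take i \<sigma>)) = \<sigma> ! i"
  proof (intro allI impI)
    fix i assume i: "i < length \<sigma>"
    have t: "take i \<rho> = take i \<sigma>" using i unfolding \<rho>_def by simp
    have n: "\<rho> ! i = \<sigma> ! i" using i unfolding \<rho>_def by (simp add: nth_append)
    have "h (T (take i \<rho>)) = \<rho> ! i" using hh i by blast
    then show "h (T (take i \<sigma>)) = \<sigma> ! i" using t n by simp
  qed
  then show "\<exists>h\<in>H. \<forall>i<length \<sigma>. h (T (take i \<sigma>)) = \<sigma> ! i" using h by blast
qed

lemma path_len:
  assumes "AL_path w d \<sigma>" shows "length \<sigma> \<le> d"
proof (rule ccontr)
  assume "\<not> length \<sigma> \<le> d"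
  then have "d < length \<sigma>" by simp
  then have "AL_internal w d (take d \<sigma>)" using assms unfolding AL_path_def by blast
  then show False using \<open>d < length \<sigma>\<close> unfolding AL_internal_def by simp
qed

lemma L2:
  assumes "L_shattered H d T"
  shows "AL_shattered H w d T"
  unfolding AL_shattered_def
proof (intro allI impI)
  fix \<sigma> assume p: "AL_path w d \<sigma>"
  have ld: "length \<sigma> \<le> d" using path_len[OF p] .
  define \<rho> where "\<rho> = \<sigma> @ replicate (d - length \<sigma>) False"
  have "length \<rho> = d" using ld unfolding \<rho>_def by simp
  then obtain h where "h \<in> H" "\<forall>i<d. h (T (take i \<rho>)) = \<rho> ! i"
    using assms unfolding L_shattered_def by blast
  then obtain h where h: "h \<in> H" and hh: "\<forall>i<d. h (T (take i \<rho>)) = \<rho> ! i" by blast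
  have "\<forall>i<length \<sigma>. h (T (take i \<sigma>)) = \<sigma> ! i"
  proof (intro allI impI)
    fix i assume i: "i < length \<sigma>"
    have t: "take i \<rho> = take i \<sigma>" using i unfolding \<rho>_def by simp
    have n: "\<rho> ! i = \<sigma> ! i" using i unfolding \<rho>_def by (simp add: nth_append)
    have "i < d" using i ld by simp
    then have "h (T (take i \<rho>)) = \<rho> ! i" using hh by blast
    then show "h (T (take i \<sigma>)) = \<sigma> ! i" using t n by simp
  qed
  then show "\<exists>h\<in>H. \<forall>i<length \<sigma>. h (T (take i \<sigma>)) = \<sigma> ! i" using h by blast
qed

lemma L_le_AL: "Ldim H \<le> ALdim w H"
  unfolding Ldim_def ALdim_def
  by (rule Sup_subset_mono) (use L2 in blast)

lemma AL_mono: "w1 \<le> w2 \<Longrightarrow> ALdim w2 H \<le> ALdim w1 H"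
  unfolding ALdim_def
  by (rule Sup_subset_mono) (use L3 in blast)

lemma AL_le_L:
  assumes "Ldim H = enat n" "n + 1 \<le> w"
  shows "ALdim w H \<le> Ldim H"
  unfolding ALdim_def
proof (rule Sup_least)
  fix x assume "x \<in> enat ` {d. \<exists>T. AL_shattered H w d T}"
  then obtain d T where x: "x = enat d" and s: "AL_shattered H w d T" by blast
  have "L_shattered H (min w d) T" using L1[OF s] .
  then have "enat (min w d) \<le> Ldim H" unfolding Ldim_def by (intro Sup_upper) blast
  then have "min w d \<le> n" using assms(1) by simp
  then have "d \<le> n" using assms(2) by simp
  then show "x \<le> Ldim H" using x assms(1) by simp
qed

theorem lemma1:
  fixes H :: "('x \<Rightarrow> bool) set"
  shows "(\<forall>w1 w2. 1 \<le> w1 \<and> w1 < w2 \<longrightarrow> ALdim w2 H \<le> ALdim w1 H)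
    \<and> (\<forall>w. 1 \<le> w \<longrightarrow> min (enat w) (Ldim H) \<le> ALdim w H)
    \<and> (Ldim H < \<infinity> \<longrightarrow> (\<forall>w. 1 \<le> w \<and> Ldim H + 1 \<le> enat w \<longrightarrow> ALdim w H = Ldim H))
    \<and> (Ldim H < \<infinity> \<longrightarrow> Wdim H \<le> Ldim H + 1)
    \<and> (Wdim H < \<infinity> \<longleftrightarrow> Ldim H < \<infinity>)"
proof -
  have A: "\<forall>w1 w2. 1 \<le> w1 \<and> w1 < w2 \<longrightarrow> ALdim w2 H \<le> ALdim w1 H"
    using AL_mono less_imp_le by blast
  have B: "\<forall>w. 1 \<le> w \<longrightarrow> min (enat w) (Ldim H) \<le> ALdim w H"
    using L_le_AL min.coboundedI2 by blast
  have C: "Ldim H < \<infinity> \<longrightarrow> (\<forall>w. 1 \<le> w \<and> Ldim H + 1 \<le> enat w \<longrightarrow> ALdim w H = Ldim H)"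
  proof (intro impI allI)
    fix w assume f: "Ldim H < \<infinity>" and w: "1 \<le> w \<and> Ldim H + 1 \<le> enat w"
    obtain n where n: "Ldim H = enat n" using f by (cases "Ldim H") auto
    have "n + 1 \<le> w" using w n by (simp add: one_enat_def)
    then show "ALdim w H = Ldim H" using AL_le_L[OF n] L_le_AL by (metis antisym)
  qed
  have D: "Ldim H < \<infinity> \<longrightarrow> Wdim H \<le> Ldim H + 1"
  proof
    assume f: "Ldim H < \<infinity>"
    obtain n where n: "Ldim H = enat n" using f by (cases "Ldim H") auto
    have a: "ALdim (n+1) H = Ldim H" using C f n by (simp add: one_enat_def)
    have P: "1 \<le> n + 1 \<and> ALdim (n+1) H < \<infinity>" using a f by simp
    then have ex: "\<exists>w\<ge>1. ALdim w H < \<infinity>" by blast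
    have "(LEAST w. w \<ge> 1 \<and> ALdim w H < \<infinity>) \<le> n + 1" using P by (rule Least_le)
    then show "Wdim H \<le> Ldim H + 1" unfolding Wdim_def using ex n by (simp add: one_enat_def)
  qed
  have E: "Wdim H < \<infinity> \<longleftrightarrow> Ldim H < \<infinity>"
  proof
    assume "Wdim H < \<infinity>"
    then obtain w where "ALdim w H < \<infinity>" unfolding Wdim_def by (auto split: if_splits)
    then show "Ldim H < \<infinity>" using L_le_AL by (metis le_less_trans)
  next
    assume f: "Ldim H < \<infinity>"
    obtain n where n: "Ldim H = enat n" using f by (cases "Ldim H") auto
    have "Wdim H \<le> enat (n+1)" using D f n by (simp add: one_enat_def)
    then show "Wdim H < \<infinity>" by (cases "Wdim H") auto
  qed
  show ?thesis using A B C D E by blast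
qed

end
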